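(* For every integer $n\geq 2$, the operator $W_n^{*}$ on $H^2$ is Devaney chaotic.
   Context: $H^2$ denotes the Hardy space of analytic functions $f(z)=\sum_{k\ge0}\hat f(k)z^k$ on the open unit disk with $\sum_{k}|\hat f(k)|^2<\infty$. For $n\in\mathbb{N}$, $W_n$ is the bounded operator on $H^2$ given by $W_nf(z)=(1+z+\cdots+z^{n-1})f(z^n)$, and $W_n^{*}$ is its adjoint. An operator $T$ on a separable Banach space $Y$ is Devaney chaotic if it is hypercyclic (some vector has dense orbit) and its set of periodic points (vectors $f$ with $T^kf=f$ for some $k\in\mathbb{N}$) is dense in $Y$. *)

theory Defs
  imports "HOL-Analysis.Analysis"
begin

text \<open>Elements of H^2 are represented as functions complex => complex that are
holomorphic on the open unit disk, with square-summable Taylor coefficients at 0;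
as a canonical representative they are taken to vanish outside the disk.\<close>

definition h2coeff :: "(complex \<Rightarrow> complex) \<Rightarrow> nat \<Rightarrow> complex" where
  "h2coeff f k = (deriv ^^ k) f 0 / of_nat (fact k)"

definition H2 :: "(complex \<Rightarrow> complex) set" where
  "H2 = {f. f holomorphic_on ball 0 1 \<and> (\<forall>z. z \<notin> ball 0 1 \<longrightarrow> f z = 0)
            \<and> summable (\<lambda>k. (norm (h2coeff f k))\<^sup>2)}"

definition h2inner :: "(complex \<Rightarrow> complex) \<Rightarrow> (complex \<Rightarrow> complex) \<Rightarrow> complex" where
  "h2inner f g = (\<Sum>k. h2coeff f k * cnj (h2coeff g k))"

definition h2dist :: "(complex \<Rightarrow> complex) \<Rightarrow> (complex \<Rightarrow> complex) \<Rightarrow> real" where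
  "h2dist f g = sqrt (\<Sum>k. (norm (h2coeff f k - h2coeff g k))\<^sup>2)"

definition W :: "nat \<Rightarrow> (complex \<Rightarrow> complex) \<Rightarrow> (complex \<Rightarrow> complex)" where
  "W n f = (\<lambda>z. if z \<in> ball 0 1 then (\<Sum>j<n. z ^ j) * f (z ^ n) else 0)"

definition W_adj :: "nat \<Rightarrow> (complex \<Rightarrow> complex) \<Rightarrow> (complex \<Rightarrow> complex)" where
  "W_adj n = (THE T. (\<forall>g. T g \<in> H2)
                   \<and> (\<forall>g. g \<notin> H2 \<longrightarrow> T g = (\<lambda>z. 0))
                   \<and> (\<forall>f\<in>H2. \<forall>g\<in>H2. h2inner (W n f) g = h2inner f (T g)))"

definition h2_dense :: "(complex \<Rightarrow> complex) set \<Rightarrow> bool" where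
  "h2_dense S \<longleftrightarrow> S \<subseteq> H2 \<and> (\<forall>g\<in>H2. \<forall>e>0. \<exists>f\<in>S. h2dist f g < e)"

definition h2_hypercyclic :: "((complex \<Rightarrow> complex) \<Rightarrow> (complex \<Rightarrow> complex)) \<Rightarrow> bool" where
  "h2_hypercyclic T \<longleftrightarrow> (\<exists>f\<in>H2. h2_dense {(T ^^ k) f | k. True})"

definition h2_periodic_points :: "((complex \<Rightarrow> complex) \<Rightarrow> (complex \<Rightarrow> complex)) \<Rightarrow> (complex \<Rightarrow> complex) set" where
  "h2_periodic_points T = {f \<in> H2. \<exists>k\<ge>1. (T ^^ k) f = f}"

definition h2_devaney_chaotic :: "((complex \<Rightarrow> complex) \<Rightarrow> (complex \<Rightarrow> complex)) \<Rightarrow> bool" where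
  "h2_devaney_chaotic T \<longleftrightarrow> h2_hypercyclic T \<and> h2_dense (h2_periodic_points T)"

end

theory Submission
  imports Defs "HOL-Complex_Analysis.Cauchy_Integral_Formula" "HOL-Library.Countable"
begin

definition l2 :: "(nat \<Rightarrow> complex) \<Rightarrow> bool" where
  "l2 x \<longleftrightarrow> summable (\<lambda>k. (cmod (x k))^2)"

definition nrm :: "(nat \<Rightarrow> complex) \<Rightarrow> real" where
  "nrm x = sqrt (\<Sum>k. (cmod (x k))^2)"

lemma sbound:
  fixes f :: "nat \<Rightarrow> real"
  assumes "\<And>i. 0 \<le> f i" "\<And>K. sum f {..<K} \<le> B"
  shows "summable f \<and> suminf f \<le> B"
proof -
  have s: "summable f"
    by (rule bounded_imp_summable[of _ B]) (use assms(1) in simp, metis assms(2) lessThan_Suc_atMost)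
  then show ?thesis using suminf_le_const assms by blast
qed

lemma nrm_sq: "l2 x \<Longrightarrow> (nrm x)^2 = (\<Sum>k. (cmod (x k))^2)"
proof -
  assume "l2 x"
  then have "0 \<le> (\<Sum>k. (cmod (x k))^2)"
    unfolding l2_def by (rule suminf_nonneg) simp
  then show ?thesis unfolding nrm_def by simp
qed

lemma nrm_nonneg: "l2 x \<Longrightarrow> 0 \<le> nrm x"
  using nrm_sq[of x] unfolding nrm_def by (metis real_sqrt_ge_zero zero_le_power2)

lemma l2_partial: "l2 x \<Longrightarrow> (\<Sum>i<K. (cmod (x i))^2) \<le> (nrm x)^2"
proof -
  assume a: "l2 x"
  have "(\<Sum>i<K. (cmod (x i))^2) \<le> (\<Sum>i. (cmod (x i))^2)"
    by (rule sum_le_suminf) (use a in \<open>auto simp: l2_def\<close>)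
  then show ?thesis using nrm_sq[OF a] by simp
qed

lemma l2_boundI:
  assumes "\<And>K. (\<Sum>i<K. (cmod (x i))^2) \<le> B"
  shows "l2 x \<and> (nrm x)^2 \<le> B"
proof -
  have "summable (\<lambda>i. (cmod (x i))^2) \<and> (\<Sum>i. (cmod (x i))^2) \<le> B"
    by (rule sbound) (use assms in auto)
  then show ?thesis unfolding l2_def using nrm_sq[of x] by (simp add: l2_def)
qed

lemma l2_boundI':
  assumes "\<And>K. (\<Sum>i<K. (cmod (x i))^2) \<le> B^2" "0 \<le> B"
  shows "l2 x \<and> nrm x \<le> B"
  using l2_boundI[of x "B^2", OF assms(1)] assms(2) nrm_nonneg[of x]
  by (meson power2_le_imp_le)

lemma l2_triangle:
  assumes "l2 x" "l2 y"
  shows "l2 (\<lambda>i. x i + y i) \<and> nrm (\<lambda>i. x i + y i) \<le> nrm x + nrm y"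
proof (rule l2_boundI')
  fix K
  have e: "(\<Sum>i<K. (cmod (x i + y i))^2) = (L2_set (\<lambda>i. cmod (x i + y i)) {..<K})^2"
    unfolding L2_set_def by (simp add: sum_nonneg)
  have "L2_set (\<lambda>i. cmod (x i + y i)) {..<K} \<le> L2_set (\<lambda>i. cmod (x i) + cmod (y i)) {..<K}"
    by (rule L2_set_mono) (auto simp: norm_triangle_ineq)
  also have "\<dots> \<le> L2_set (\<lambda>i. cmod (x i)) {..<K} + L2_set (\<lambda>i. cmod (y i)) {..<K}"
    by (rule L2_set_triangle_ineq)
  also have "L2_set (\<lambda>i. cmod (x i)) {..<K} \<le> nrm x"
    unfolding L2_set_def using l2_partial[OF assms(1), of K] nrm_nonneg[OF assms(1)]
    by (metis real_sqrt_le_mono real_sqrt_unique)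
  also have "L2_set (\<lambda>i. cmod (y i)) {..<K} \<le> nrm y"
    unfolding L2_set_def using l2_partial[OF assms(2), of K] nrm_nonneg[OF assms(2)]
    by (metis real_sqrt_le_mono real_sqrt_unique)
  finally show "(\<Sum>i<K. (cmod (x i + y i))^2) \<le> (nrm x + nrm y)^2"
    unfolding e by (simp add: power_mono)
qed (simp add: nrm_nonneg assms add_nonneg_nonneg)

lemma l2_uminus: "l2 (\<lambda>i. - x i) = l2 x" "nrm (\<lambda>i. - x i) = nrm x"
  unfolding l2_def nrm_def by simp_all

lemma l2_diff:
  assumes "l2 x" "l2 y"
  shows "l2 (\<lambda>i. x i - y i)"
  using l2_triangle[OF assms(1), of "\<lambda>i. - y i"] assms(2) by (simp add: l2_uminus)

lemma nrm_commute: "nrm (\<lambda>i. x i - y i) = nrm (\<lambda>i. y i - x i)"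
  unfolding nrm_def by (simp add: norm_minus_commute)

lemma nrm_tri3:
  assumes "l2 x" "l2 y" "l2 z"
  shows "nrm (\<lambda>i. x i - z i) \<le> nrm (\<lambda>i. x i - y i) + nrm (\<lambda>i. y i - z i)"
  using l2_triangle[OF l2_diff[OF assms(1,2)] l2_diff[OF assms(2,3)]] by simp

lemma l2_fin:
  assumes "\<And>i. i \<ge> M \<Longrightarrow> x i = 0"
  shows "l2 x" "(nrm x)^2 = (\<Sum>i<M. (cmod (x i))^2)"
proof -
  show "l2 x" unfolding l2_def by (rule summable_finite[of "{..<M}"]) (use assms in auto)
  then show "(nrm x)^2 = (\<Sum>i<M. (cmod (x i))^2)"
    by (simp add: nrm_sq) (rule suminf_finite, use assms in auto)
qed

definition fnc :: "(nat \<Rightarrow> complex) \<Rightarrow> complex \<Rightarrow> complex" where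
  "fnc a = (\<lambda>z. if z \<in> ball 0 1 then (\<Sum>k. a k * z^k) else 0)"

lemma fnc_bounded:
  assumes C: "\<And>k. cmod (a k) \<le> C"
  shows "fnc a holomorphic_on ball 0 1" "h2coeff (fnc a) = a"
proof -
  define F where "F = Abs_fps a"
  have r: "fps_conv_radius F \<ge> 1"
    unfolding fps_conv_radius_def
  proof (rule conv_radius_geI_ex')
    fix r :: real assume r: "0 < r" "ereal r < 1"
    then have r1: "r < 1" by simp
    show "summable (\<lambda>n. fps_nth F n * of_real r ^ n)"
    proof (rule summable_comparison_test[of _ "\<lambda>n. C * r^n"])
      show "\<exists>N. \<forall>n\<ge>N. norm (fps_nth F n * complex_of_real r ^ n) \<le> C * r ^ n"
        using r C by (intro exI[of _ 0] allI impI) (simp add: F_def norm_mult norm_power mult_right_mono)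
      show "summable (\<lambda>n. C * r ^ n)"
        using r r1 by (intro summable_mult summable_geometric) auto
    qed
  qed
  have ev: "\<forall>z \<in> ball 0 1. fnc a z = eval_fps F z"
    by (simp add: fnc_def eval_fps_def F_def)
  have sub: "ball (0::complex) 1 \<subseteq> eball 0 (fps_conv_radius F)"
  proof
    fix x :: complex assume x: "x \<in> ball 0 1"
    have "ereal (dist 0 x) < 1" using x by (simp add: one_ereal_def)
    then have "ereal (dist 0 x) < fps_conv_radius F" using r by (rule less_le_trans)
    then show "x \<in> eball 0 (fps_conv_radius F)" using in_eball_iff by blast
  qed
  show "fnc a holomorphic_on ball 0 1"
    by (rule holomorphic_transform[OF holomorphic_on_eval_fps[OF sub]]) (simp add: ev)
  have exp: "fnc a has_fps_expansion F"
    unfolding has_fps_expansion_def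
  proof
    have "(0::ereal) < 1" by simp
    then show "0 < fps_conv_radius F" using r by (rule less_le_trans)
    have "eventually (\<lambda>z. z \<in> ball (0::complex) 1) (nhds 0)"
      by (intro eventually_nhds_in_open) auto
    then show "\<forall>\<^sub>F z in nhds 0. eval_fps F z = fnc a z"
      by eventually_elim (use ev in auto)
  qed
  show "h2coeff (fnc a) = a"
  proof
    fix n
    have "fps_nth F n = (deriv ^^ n) (fnc a) 0 / fact n"
      by (rule fps_nth_fps_expansion[OF exp])
    then show "h2coeff (fnc a) n = a n" by (simp add: h2coeff_def F_def)
  qed
qed

lemma l2_bounded: "l2 a \<Longrightarrow> cmod (a k) \<le> nrm a"
proof -
  assume a: "l2 a"
  have "(\<Sum>i<Suc k. (cmod (a i))^2) \<le> (nrm a)^2" by (rule l2_partial[OF a])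
  moreover have "(cmod (a k))^2 \<le> (\<Sum>i<Suc k. (cmod (a i))^2)"
    by (simp add: sum_nonneg)
  ultimately have "(cmod (a k))^2 \<le> (nrm a)^2" by linarith
  then show ?thesis using nrm_nonneg[OF a] by (rule power2_le_imp_le)
qed

lemma fnc_H2: "l2 a \<Longrightarrow> fnc a \<in> H2 \<and> h2coeff (fnc a) = a"
proof -
  assume a: "l2 a"
  have h: "fnc a holomorphic_on ball 0 1" "h2coeff (fnc a) = a"
    using fnc_bounded[of a "nrm a"] l2_bounded[OF a] by blast+
  have "\<forall>z. z \<notin> ball 0 1 \<longrightarrow> fnc a z = 0" by (simp add: fnc_def)
  then show ?thesis using h a unfolding H2_def l2_def by simp
qed

lemma H2_fnc: "f \<in> H2 \<Longrightarrow> f = fnc (h2coeff f)"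
proof
  fix z assume f: "f \<in> H2"
  show "f z = fnc (h2coeff f) z"
  proof (cases "z \<in> ball 0 1")
    case True
    have "(\<lambda>n. (deriv ^^ n) f 0 / (fact n) * (z-0)^n) sums f z"
      by (rule holomorphic_power_series) (use f True in \<open>auto simp: H2_def\<close>)
    then have "f z = (\<Sum>k. h2coeff f k * z^k)"
      by (simp add: h2coeff_def sums_iff)
    then show ?thesis using True by (simp add: fnc_def)
  next
    case False
    then show ?thesis using f by (simp add: fnc_def H2_def)
  qed
qed

lemma H2_l2: "f \<in> H2 \<Longrightarrow> l2 (h2coeff f)"
  by (simp add: H2_def l2_def)

lemma h2dist_nrm: "h2dist f g = nrm (\<lambda>k. h2coeff f k - h2coeff g k)"
  by (simp add: h2dist_def nrm_def)

definition Bk :: "nat \<Rightarrow> (nat \<Rightarrow> complex) \<Rightarrow> nat \<Rightarrow> complex" where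
  "Bk N c k = sum c {k*N..<k*N+N}"

lemma sum_shift_ivl: "sum (f :: nat \<Rightarrow> 'a::comm_monoid_add) {m..<m+n} = (\<Sum>i<n. f (m+i))"
  by (induction n) (simp_all add: add.assoc[symmetric])

lemma Bk_comp:
  assumes "0 < a"
  shows "Bk b (Bk a c) = Bk (a*b) c"
proof
  fix k
  define c' where "c' i = c (k*(a*b) + i)" for i
  have "Bk b (Bk a c) k = (\<Sum>t<b. Bk a c (k*b + t))"
    by (simp add: Bk_def sum_shift_ivl)
  also have "\<dots> = (\<Sum>t<b. sum c' {t*a..<t*a+a})"
  proof (rule sum.cong[OF refl])
    fix t
    have "Bk a c (k*b+t) = (\<Sum>i<a. c ((k*b+t)*a + i))"
      by (simp add: Bk_def sum_shift_ivl)
    also have "\<dots> = (\<Sum>i<a. c' (t*a + i))"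
      by (simp add: c'_def algebra_simps)
    also have "\<dots> = sum c' {t*a..<t*a+a}"
      by (simp add: sum_shift_ivl)
    finally show "Bk a c (k*b+t) = sum c' {t*a..<t*a+a}" .
  qed
  also have "\<dots> = sum c' {..<b*a}"
    by (rule sum.nat_group)
  also have "\<dots> = Bk (a*b) c k"
    by (simp add: Bk_def sum_shift_ivl c'_def mult.commute)
  finally show "Bk b (Bk a c) k = Bk (a*b) c k" .
qed

lemma Bk_1: "Bk 1 c = c"
  by (simp add: Bk_def fun_eq_iff)

lemma Bk_sum: "Bk N (\<lambda>i. \<Sum>j\<in>A. z j i) k = (\<Sum>j\<in>A. Bk N (z j) k)"
  unfolding Bk_def by (rule sum.swap)

lemma Bk_add: "Bk N (\<lambda>i. x i + y i) k = Bk N x k + Bk N y k"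
  unfolding Bk_def by (simp add: sum.distrib)

lemma Bk_bound:
  assumes c: "l2 c" and N: "0 < N"
  shows "l2 (Bk N c) \<and> (nrm (Bk N c))^2 \<le> N * (nrm c)^2"
proof (rule l2_boundI)
  fix K
  have "(\<Sum>k<K. (cmod (Bk N c k))^2) \<le> (\<Sum>k<K. N * (\<Sum>i\<in>{k*N..<k*N+N}. (cmod (c i))^2))"
  proof (rule sum_mono)
    fix k
    have "cmod (Bk N c k) \<le> (\<Sum>i\<in>{k*N..<k*N+N}. cmod (c i))"
      unfolding Bk_def by (rule norm_sum)
    then have "(cmod (Bk N c k))^2 \<le> (\<Sum>i\<in>{k*N..<k*N+N}. cmod (c i))^2"
      by (rule power_mono) simp
    also have "\<dots> \<le> (\<Sum>i\<in>{k*N..<k*N+N}. (cmod (c i))^2) * card {k*N..<k*N+N}"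
      by (rule sum_squared_le_sum_of_squares)
    finally show "(cmod (Bk N c k))^2 \<le> N * (\<Sum>i\<in>{k*N..<k*N+N}. (cmod (c i))^2)"
      by (simp add: mult.commute)
  qed
  also have "\<dots> = N * (\<Sum>i<K*N. (cmod (c i))^2)"
    by (simp add: sum_distrib_left[symmetric] sum.nat_group)
  also have "\<dots> \<le> N * (nrm c)^2"
    using l2_partial[OF c] by (simp add: mult_left_mono)
  finally show "(\<Sum>k<K. (cmod (Bk N c k))^2) \<le> N * (nrm c)^2" .
qed

lemma l2_prod_summable:
  assumes "l2 x" "l2 y"
  shows "summable (\<lambda>k. x k * cnj (y k))"
proof (rule summable_norm_cancel, rule summable_comparison_test)
  show "\<exists>N. \<forall>k\<ge>N. norm (norm (x k * cnj (y k))) \<le> ((cmod (x k))^2 + (cmod (y k))^2) / 2"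
  proof (intro exI[of _ 0] allI impI)
    fix k
    have "0 \<le> (cmod (x k) - cmod (y k))^2" by simp
    then show "norm (norm (x k * cnj (y k))) \<le> ((cmod (x k))^2 + (cmod (y k))^2) / 2"
      by (simp add: norm_mult power2_diff)
  qed
  show "summable (\<lambda>k. ((cmod (x k))^2 + (cmod (y k))^2) / 2)"
    using assms unfolding l2_def by (intro summable_divide summable_add)
qed

definition WA :: "nat \<Rightarrow> (complex \<Rightarrow> complex) \<Rightarrow> (complex \<Rightarrow> complex)" where
  "WA n g = (if g \<in> H2 then fnc (Bk n (h2coeff g)) else (\<lambda>z. 0))"

lemma W_coeff:
  assumes f: "f \<in> H2" and n: "0 < n"
  shows "W n f = fnc (\<lambda>m. h2coeff f (m div n)) \<and> l2 (\<lambda>m. h2coeff f (m div n))"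
proof
  define a where "a = h2coeff f"
  have a: "l2 a" using f by (simp add: a_def H2_l2)
  show "l2 (\<lambda>m. h2coeff f (m div n))"
  proof (rule conjunct1[OF l2_boundI])
    fix K
    have "(\<Sum>m<K. (cmod (a (m div n)))^2) \<le> (\<Sum>m<K*n. (cmod (a (m div n)))^2)"
      using n by (intro sum_mono2) auto
    also have "\<dots> = (\<Sum>k<K. \<Sum>m\<in>{k*n..<k*n+n}. (cmod (a (m div n)))^2)"
      by (rule sum.nat_group[symmetric])
    also have "\<dots> = (\<Sum>k<K. n * (cmod (a k))^2)"
    proof (rule sum.cong[OF refl])
      fix k
      have "\<And>m. m \<in> {k*n..<k*n+n} \<Longrightarrow> m div n = k"
        using n by (auto simp: div_nat_eqI mult.commute)
      then show "(\<Sum>m\<in>{k*n..<k*n+n}. (cmod (a (m div n)))^2) = n * (cmod (a k))^2"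
        by simp
    qed
    also have "\<dots> = n * (\<Sum>k<K. (cmod (a k))^2)"
      by (simp add: sum_distrib_left)
    also have "\<dots> \<le> n * (nrm a)^2"
      using l2_partial[OF a] by (simp add: mult_left_mono)
    finally show "(\<Sum>m<K. (cmod (h2coeff f (m div n)))^2) \<le> n * (nrm a)^2"
      by (simp add: a_def)
  qed
  show "W n f = fnc (\<lambda>m. h2coeff f (m div n))"
  proof
    fix z
    show "W n f z = fnc (\<lambda>m. h2coeff f (m div n)) z"
    proof (cases "z \<in> ball 0 1")
      case False
      then show ?thesis by (simp add: W_def fnc_def)
    next
      case True
      then have z1: "norm z < 1" by simp
      have zn: "z^n \<in> ball 0 1" using z1 n
        by (simp add: norm_power power_less_one_iff)
      define P where "P = (\<Sum>j<n. z^j)"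
      have bnd: "\<And>m. cmod (a m) \<le> nrm a" using l2_bounded[OF a] .
      have sb: "summable (\<lambda>m. a (m div n) * z^m)"
      proof (rule summable_comparison_test[of _ "\<lambda>m. nrm a * norm z ^ m"])
        show "\<exists>N. \<forall>m\<ge>N. norm (a (m div n) * z ^ m) \<le> nrm a * norm z ^ m"
          using bnd by (intro exI[of _ 0] allI impI) (simp add: norm_mult norm_power mult_right_mono)
        show "summable (\<lambda>m. nrm a * norm z ^ m)"
          using z1 by (intro summable_mult summable_geometric) auto
      qed
      then have "(\<lambda>m. a (m div n) * z^m) sums (\<Sum>m. a (m div n) * z^m)"
        by (rule summable_sums)
      from sums_group[OF this n]
      have g1: "(\<lambda>k. \<Sum>m\<in>{k*n..<k*n+n}. a (m div n) * z^m) sums (\<Sum>m. a (m div n) * z^m)" .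
      have blk: "(\<Sum>m\<in>{k*n..<k*n+n}. a (m div n) * z^m) = a k * (z^n)^k * P" for k
      proof -
        have "\<And>m. m \<in> {k*n..<k*n+n} \<Longrightarrow> m div n = k"
          using n by (auto simp: div_nat_eqI mult.commute)
        then have "(\<Sum>m\<in>{k*n..<k*n+n}. a (m div n) * z^m) = (\<Sum>m\<in>{k*n..<k*n+n}. a k * z^m)"
          by simp
        also have "\<dots> = (\<Sum>j<n. a k * z^(k*n+j))"
          by (simp add: sum_shift_ivl)
        also have "\<dots> = (\<Sum>j<n. (a k * (z^n)^k) * z^j)"
          by (rule sum.cong[OF refl]) (simp add: power_add power_mult[symmetric] mult.commute mult.left_commute)
        also have "\<dots> = a k * (z^n)^k * P"
          by (simp add: P_def sum_distrib_left)
        finally show ?thesis .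
      qed
      have fz: "f (z^n) = (\<Sum>k. a k * (z^n)^k)"
        using H2_fnc[OF f] zn by (metis a_def fnc_def)
      have sb2: "summable (\<lambda>k. a k * (z^n)^k)"
      proof (rule summable_comparison_test[of _ "\<lambda>m. nrm a * norm (z^n) ^ m"])
        show "\<exists>N. \<forall>m\<ge>N. norm (a m * (z^n) ^ m) \<le> nrm a * norm (z^n) ^ m"
          using bnd by (intro exI[of _ 0] allI impI) (simp add: norm_mult norm_power mult_right_mono)
        show "summable (\<lambda>m. nrm a * norm (z^n) ^ m)"
          using zn by (intro summable_mult summable_geometric) auto
      qed
      have "(\<lambda>k. a k * (z^n)^k * P) sums (f (z^n) * P)"
        using sums_mult2[OF summable_sums[OF sb2], of P] fz by simp
      with g1 blk have "(\<Sum>m. a (m div n) * z^m) = f (z^n) * P"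
        using sums_unique2 by (metis (no_types, lifting) sums_cong)
      then show ?thesis using True by (simp add: W_def fnc_def P_def a_def mult.commute)
    qed
  qed
qed

lemma fnc_zero: "fnc (\<lambda>_. 0) = (\<lambda>z. 0)"
  by (simp add: fnc_def fun_eq_iff)

lemma zero_H2: "(\<lambda>z. 0) \<in> H2"
  using fnc_H2[of "\<lambda>_. 0"] l2_fin[of 0 "\<lambda>_. 0"] by (simp add: fnc_zero)

lemma WA_H2: "0 < n \<Longrightarrow> WA n g \<in> H2"
  using fnc_H2 Bk_bound H2_l2 zero_H2 by (auto simp: WA_def)

lemma WA_coeff: "0 < n \<Longrightarrow> g \<in> H2 \<Longrightarrow> h2coeff (WA n g) = Bk n (h2coeff g)"
  using fnc_H2 Bk_bound H2_l2 by (auto simp: WA_def)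

lemma h2inner_W:
  assumes f: "f \<in> H2" and g: "g \<in> H2" and n: "0 < n"
  shows "h2inner (W n f) g = h2inner f (WA n g)"
proof -
  define a where "a = h2coeff f"
  define c where "c = h2coeff g"
  define b where "b = (\<lambda>m. a (m div n))"
  have Wf: "W n f = fnc b" "l2 b" using W_coeff[OF f n] by (simp_all add: a_def b_def)
  have hb: "h2coeff (W n f) = b" using fnc_H2[OF Wf(2)] Wf(1) by simp
  have c: "l2 c" using g by (simp add: c_def H2_l2)
  have "(\<lambda>m. b m * cnj (c m)) sums h2inner (W n f) g"
    unfolding h2inner_def hb c_def[symmetric] by (rule summable_sums[OF l2_prod_summable[OF Wf(2) c]])
  from sums_group[OF this n]
  have s1: "(\<lambda>k. \<Sum>m\<in>{k*n..<k*n+n}. b m * cnj (c m)) sums h2inner (W n f) g" .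
  have blk: "(\<Sum>m\<in>{k*n..<k*n+n}. b m * cnj (c m)) = a k * cnj (Bk n c k)" for k
  proof -
    have "\<And>m. m \<in> {k*n..<k*n+n} \<Longrightarrow> m div n = k"
      using n by (auto simp: div_nat_eqI mult.commute)
    then have "(\<Sum>m\<in>{k*n..<k*n+n}. b m * cnj (c m)) = (\<Sum>m\<in>{k*n..<k*n+n}. a k * cnj (c m))"
      by (simp add: b_def)
    then show ?thesis by (simp add: Bk_def sum_distrib_left)
  qed
  have "h2inner f (WA n g) = (\<Sum>k. a k * cnj (Bk n c k))"
    by (simp add: h2inner_def WA_coeff[OF n g] a_def c_def)
  moreover have "(\<lambda>k. a k * cnj (Bk n c k)) sums h2inner (W n f) g"
    using s1 blk by simp
  ultimately show ?thesis by (simp add: sums_iff)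
qed

definition ek :: "nat \<Rightarrow> nat \<Rightarrow> complex" where
  "ek k = (\<lambda>i. if i = k then 1 else 0)"

lemma ek_l2: "l2 (ek k)"
  by (rule l2_fin[of "Suc k"]) (simp add: ek_def)

lemma h2inner_ek: "h2inner (fnc (ek k)) h = cnj (h2coeff h k)"
proof -
  have "h2coeff (fnc (ek k)) = ek k" using fnc_H2[OF ek_l2] by simp
  then have "(\<lambda>i. h2coeff (fnc (ek k)) i * cnj (h2coeff h i)) = (\<lambda>i. if i = k then cnj (h2coeff h i) else 0)"
    by (auto simp: ek_def fun_eq_iff)
  then have "h2inner (fnc (ek k)) h = (\<Sum>i. if i = k then cnj (h2coeff h i) else 0)"
    by (simp add: h2inner_def)
  also have "\<dots> = cnj (h2coeff h k)"
    using sums_single[of k "\<lambda>i. cnj (h2coeff h i)"] by (simp add: sums_iff)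
  finally show ?thesis .
qed

lemma W_adj_eq:
  assumes n: "0 < n"
  shows "W_adj n = WA n"
  unfolding W_adj_def
proof (rule the_equality)
  show "(\<forall>g. WA n g \<in> H2) \<and> (\<forall>g. g \<notin> H2 \<longrightarrow> WA n g = (\<lambda>z. 0)) \<and>
        (\<forall>f\<in>H2. \<forall>g\<in>H2. h2inner (W n f) g = h2inner f (WA n g))"
    using WA_H2[OF n] h2inner_W[OF _ _ n] by (auto simp: WA_def)
next
  fix T
  assume T: "(\<forall>g. T g \<in> H2) \<and> (\<forall>g. g \<notin> H2 \<longrightarrow> T g = (\<lambda>z. 0)) \<and>
        (\<forall>f\<in>H2. \<forall>g\<in>H2. h2inner (W n f) g = h2inner f (T g))"
  show "T = WA n"
  proof
    fix g
    show "T g = WA n g"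
    proof (cases "g \<in> H2")
      case False
      then show ?thesis using T by (simp add: WA_def)
    next
      case True
      have "h2coeff (T g) k = h2coeff (WA n g) k" for k
      proof -
        have e: "fnc (ek k) \<in> H2" using fnc_H2[OF ek_l2] by simp
        have "h2inner (fnc (ek k)) (T g) = h2inner (fnc (ek k)) (WA n g)"
          using T h2inner_W[OF e True n] True e by auto
        then show ?thesis by (simp add: h2inner_ek)
      qed
      then have "h2coeff (T g) = h2coeff (WA n g)" by auto
      then show ?thesis using H2_fnc[of "T g"] H2_fnc[of "WA n g"] T WA_H2[OF n] by metis
    qed
  qed
qed

lemma W_adj_iter:
  assumes n: "0 < n" and g: "g \<in> H2"
  shows "(W_adj n ^^ m) g = fnc (Bk (n^m) (h2coeff g))"
proof (induction m)
  case 0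
  have "Bk (n^0) (h2coeff g) = h2coeff g" by (metis Bk_1 power_0)
  then show ?case using H2_fnc[OF g] by simp
next
  case (Suc m)
  have l: "l2 (Bk (n^m) (h2coeff g))" using Bk_bound[OF H2_l2[OF g]] n by simp
  have h: "fnc (Bk (n^m) (h2coeff g)) \<in> H2" using fnc_H2[OF l] by simp
  have "(W_adj n ^^ Suc m) g = WA n (fnc (Bk (n^m) (h2coeff g)))"
    using Suc by (simp add: W_adj_eq[OF n])
  also have "\<dots> = fnc (Bk n (Bk (n^m) (h2coeff g)))"
    using h fnc_H2[OF l] by (simp add: WA_def)
  also have "\<dots> = fnc (Bk (n^Suc m) (h2coeff g))"
    using n by (simp add: Bk_comp mult.commute)
  finally show ?case .
qed

lemma trunc_approx:
  assumes c: "l2 c" and e: "0 < e"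
  shows "\<exists>M. nrm (\<lambda>i. (if i < M then c i else 0) - c i) < e"
proof -
  define f where "f = (\<lambda>i. (cmod (c i))^2)"
  have sf: "summable f" using c by (simp add: l2_def f_def)
  from summable_LIMSEQ[OF sf] have lim: "(\<lambda>M. sum f {..<M}) \<longlonglongrightarrow> suminf f" .
  have "0 < e^2" using e by simp
  from LIMSEQ_D[OF lim this] obtain M0 where "\<forall>m\<ge>M0. norm (sum f {..<m} - suminf f) < e^2" by blast
  then have M: "\<bar>sum f {..<M0} - suminf f\<bar> < e^2" by auto
  define M where "M = M0"
  note M = M[folded M_def]
  have "l2 (\<lambda>i. (if i < M then c i else 0) - c i) \<and> (nrm (\<lambda>i. (if i < M then c i else 0) - c i))^2 \<le> suminf f - sum f {..<M}"
  proof (rule l2_boundI)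
    fix K
    have "(\<Sum>i<K. (cmod ((if i < M then c i else 0) - c i))^2) = (\<Sum>i<K. if i < M then 0 else f i)"
      by (rule sum.cong) (auto simp: f_def)
    also have "\<dots> \<le> (\<Sum>i<M+K. if i < M then 0 else f i)"
      by (rule sum_mono2) (auto simp: f_def)
    also have "\<dots> = (\<Sum>i\<in>{M..<M+K}. f i)"
      by (rule sum.mono_neutral_cong_right) auto
    also have "\<dots> = sum f {..<M+K} - sum f {..<M}"
    proof -
      have "sum f {0..<M} + sum f {M..<M+K} = sum f {0..<M+K}"
        by (rule sum.atLeastLessThan_concat) auto
      then show ?thesis by (simp add: atLeast0LessThan)
    qed
    also have "\<dots> \<le> suminf f - sum f {..<M}"
      using sum_le_suminf[OF sf, of "{..<M+K}"] by (simp add: f_def)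
    finally show "(\<Sum>i<K. (cmod ((if i < M then c i else 0) - c i))^2) \<le> suminf f - sum f {..<M}" .
  qed
  then have "(nrm (\<lambda>i. (if i < M then c i else 0) - c i))^2 < e^2"
    using M by linarith
  then show ?thesis using e by (meson power_less_imp_less_base less_le)
qed

definition cq :: "rat \<times> rat \<Rightarrow> complex" where
  "cq q = Complex (of_rat (fst q)) (of_rat (snd q))"

definition vecq :: "(rat \<times> rat) list \<Rightarrow> nat \<Rightarrow> complex" where
  "vecq l i = (if i < length l then cq (l ! i) else 0)"

lemma cq_dense: "0 < e \<Longrightarrow> \<exists>q. cmod (cq q - u) < e"
proof -
  assume e: "0 < e"
  obtain r1 where r1: "r1 \<in> \<rat>" "Re u - e/2 < r1" "r1 < Re u + e/2"
    using Rats_dense_in_real[of "Re u - e/2" "Re u + e/2"] e by auto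
  obtain r2 where r2: "r2 \<in> \<rat>" "Im u - e/2 < r2" "r2 < Im u + e/2"
    using Rats_dense_in_real[of "Im u - e/2" "Im u + e/2"] e by auto
  obtain q1 where q1: "r1 = of_rat q1" using r1(1) Rats_cases by blast
  obtain q2 where q2: "r2 = of_rat q2" using r2(1) Rats_cases by blast
  have "cmod (cq (q1, q2) - u) \<le> \<bar>Re (cq (q1, q2) - u)\<bar> + \<bar>Im (cq (q1, q2) - u)\<bar>"
    by (rule cmod_le)
  also have "\<dots> < e" using r1 r2 q1 q2 by (simp add: cq_def abs_less_iff)
  finally show ?thesis by blast
qed

lemma vecq_approx:
  assumes u: "\<And>i. i \<ge> M \<Longrightarrow> u i = 0" and d: "0 < d"
  shows "\<exists>l. length l = M \<and> nrm (\<lambda>i. vecq l i - u i) < d"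
proof -
  define e where "e = d / (M+1)"
  have e: "0 < e" using d by (simp add: e_def)
  have "\<forall>i. \<exists>q. cmod (cq q - u i) < e" using cq_dense[OF e] by blast
  then obtain Q where Q: "\<And>i. cmod (cq (Q i) - u i) < e" by metis
  define l where "l = map Q [0..<M]"
  have z: "\<And>i. i \<ge> M \<Longrightarrow> vecq l i - u i = 0" using u by (simp add: vecq_def l_def)
  have "(nrm (\<lambda>i. vecq l i - u i))^2 = (\<Sum>i<M. (cmod (vecq l i - u i))^2)"
    by (rule l2_fin(2)) (use z in auto)
  also have "\<dots> \<le> (\<Sum>i<M. e^2)"
  proof (rule sum_mono)
    fix i assume "i \<in> {..<M}"
    then have "vecq l i = cq (Q i)" by (simp add: vecq_def l_def)
    then show "(cmod (vecq l i - u i))^2 \<le> e^2" using Q[of i]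
      by (simp add: power_mono less_imp_le)
  qed
  also have "\<dots> = M * e^2" by simp
  also have "\<dots> < d^2"
  proof -
    have "M * e^2 = d^2 * (real M / (real M+1)^2)" by (simp add: e_def power_divide add.commute mult.commute)
    also have "real M / (real M+1)^2 < (1::real)"
    proof -
      have "real M < (real M+1)^2"
      proof -
        have "0 \<le> real M * real M" by simp
        moreover have "(real M+1)^2 = real M * real M + 2 * real M + 1"
          by (simp add: power2_eq_square algebra_simps)
        ultimately show ?thesis by linarith
      qed
      moreover have p: "0 < (real M+1)^2" by (intro zero_less_power) simp
      ultimately show ?thesis by (simp only: divide_less_eq_1_pos[OF p])
    qed
    then have "d^2 * (real M / (real M+1)^2) < d^2 * 1" using d by (intro mult_strict_left_mono) auto
    finally show ?thesis by simp
  qed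
  finally have "(nrm (\<lambda>i. vecq l i - u i))^2 < d^2" .
  then have "nrm (\<lambda>i. vecq l i - u i) < d" using d by (meson power_less_imp_less_base less_le)
  moreover have "length l = M" by (simp add: l_def)
  ultimately show ?thesis by blast
qed

definition corr :: "(nat \<Rightarrow> complex) \<Rightarrow> nat \<Rightarrow> complex \<Rightarrow> nat \<Rightarrow> nat \<Rightarrow> complex" where
  "corr y M d Q i = y i + (if M \<le> i \<and> i < M + Q then d / of_nat Q else 0)"

lemma corr_supp: "(\<And>i. i \<ge> M \<Longrightarrow> y i = 0) \<Longrightarrow> i \<ge> M + Q \<Longrightarrow> corr y M d Q i = 0"
  by (simp add: corr_def)

lemma corr_sum:
  assumes Q: "0 < Q" and a: "a \<le> M"
  shows "(\<Sum>i\<in>{a..<M+Q}. corr y M d Q i) = (\<Sum>i\<in>{a..<M}. y i) + (\<Sum>i\<in>{M..<M+Q}. y i) + d"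
proof -
  have "(\<Sum>i\<in>{a..<M+Q}. corr y M d Q i) = (\<Sum>i\<in>{a..<M}. corr y M d Q i) + (\<Sum>i\<in>{M..<M+Q}. corr y M d Q i)"
    using a by (simp add: sum.atLeastLessThan_concat)
  also have "(\<Sum>i\<in>{a..<M}. corr y M d Q i) = (\<Sum>i\<in>{a..<M}. y i)"
    by (rule sum.cong) (auto simp: corr_def)
  also have "(\<Sum>i\<in>{M..<M+Q}. corr y M d Q i) = (\<Sum>i\<in>{M..<M+Q}. y i) + (\<Sum>i\<in>{M..<M+Q}. d / of_nat Q)"
    by (simp add: corr_def sum.distrib)
  also have "(\<Sum>i\<in>{M..<M+Q}. d / of_nat Q) = d" using Q by simp
  finally show ?thesis by simp
qed

lemma corr_nrm:
  assumes Q: "0 < Q"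
  shows "nrm (\<lambda>i. corr y M d Q i - y i) = cmod d / sqrt Q"
proof -
  have l: "l2 (\<lambda>i. corr y M d Q i - y i)"
    by (rule l2_fin(1)[of "M+Q"]) (simp add: corr_def)
  have "(nrm (\<lambda>i. corr y M d Q i - y i))^2 = (\<Sum>i<M+Q. (cmod (corr y M d Q i - y i))^2)"
    by (rule l2_fin(2)) (simp add: corr_def)
  also have "\<dots> = (\<Sum>i\<in>{0..<M}. (cmod (corr y M d Q i - y i))^2) + (\<Sum>i\<in>{M..<M+Q}. (cmod (corr y M d Q i - y i))^2)"
    by (simp add: atLeast0LessThan[symmetric] sum.atLeastLessThan_concat)
  also have "\<dots> = (\<Sum>i\<in>{M..<M+Q}. (cmod d / Q)^2)"
    by (simp add: corr_def norm_divide)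
  also have "\<dots> = (cmod d / sqrt Q)^2"
    using Q by (simp add: power_divide power2_eq_square)
  finally have "(nrm (\<lambda>i. corr y M d Q i - y i))^2 = (cmod d / sqrt Q)^2" .
  moreover have p: "0 \<le> cmod d / sqrt Q" by simp
  ultimately show ?thesis using power2_eq_iff_nonneg[OF nrm_nonneg[OF l] p] by blast
qed

lemma small_sqrt: "0 < e \<Longrightarrow> \<exists>Q>0. (C::real) / sqrt (real Q) < e"
proof -
  assume e: "0 < e"
  obtain Q :: nat where Q: "(C/e)^2 < Q" using reals_Archimedean2 by blast
  have "0 \<le> (C/e)^2" by simp
  then have "0 < real Q" using Q by linarith
  then have Q0: "0 < Q" by simp
  have "C / e < sqrt Q" using real_less_rsqrt[OF Q] .
  then have "C < e * sqrt Q" using e by (simp add: divide_less_eq mult.commute)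
  then have "C / sqrt Q < e" using Q0 by (simp add: divide_less_eq)
  then show ?thesis using Q0 by blast
qed

function perx :: "nat \<Rightarrow> (nat \<Rightarrow> complex) \<Rightarrow> nat \<Rightarrow> complex" where
  "perx N y m = (if m < N \<or> N < 2 then y m else perx N y (m div N) / of_nat N)"
  by pat_completeness auto
termination by (relation "Wellfounded.measure (\<lambda>(N,y,m). m)") (auto intro: div_less_dividend)

declare perx.simps[simp del]

lemma px_lo: "m < N \<Longrightarrow> perx N y m = y m"
  by (simp add: perx.simps)

lemma px_hi: "2 \<le> N \<Longrightarrow> N \<le> m \<Longrightarrow> perx N y m = perx N y (m div N) / of_nat N"
  by (subst perx.simps) simp

lemma px_idx: "0 < (N::nat) \<Longrightarrow> j < N \<Longrightarrow> (k*N + j) div N = k"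
proof -
  assume N: "0 < N" and j: "j < N"
  have "(j + k*N) div N = k + j div N" using N by simp
  then show ?thesis using j by (simp add: add.commute)
qed

lemma px_block:
  assumes N: "2 \<le> N" and j: "j < N" and k: "0 < k"
  shows "perx N y (k*N + j) = perx N y k / of_nat N"
proof -
  have "N \<le> k*N + j" using k by (simp add: trans_le_add1)
  then show ?thesis using px_hi[OF N] px_idx[of N j k] N j by simp
qed

lemma px_fix:
  assumes N: "2 \<le> N" and s: "(\<Sum>i\<in>{1..<N}. y i) = 0"
  shows "Bk N (perx N y) = perx N y"
proof
  fix k
  show "Bk N (perx N y) k = perx N y k"
  proof (cases "k = 0")
    case True
    have "Bk N (perx N y) k = (\<Sum>i<N. y i)"
      using True by (simp add: Bk_def px_lo atLeast0LessThan)
    also have "\<dots> = y 0 + (\<Sum>i\<in>{1..<N}. y i)"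
      using N by (simp add: sum.atLeast1_atMost_eq atLeast0LessThan[symmetric] sum.atLeast_Suc_lessThan)
    also have "\<dots> = perx N y k" using s True N by (simp add: px_lo)
    finally show ?thesis .
  next
    case False
    have "Bk N (perx N y) k = (\<Sum>j<N. perx N y (k*N + j))"
      by (simp add: Bk_def sum_shift_ivl)
    also have "\<dots> = (\<Sum>j<N. perx N y k / of_nat N)"
      using px_block[OF N _ , of _ k y] False by simp
    also have "\<dots> = perx N y k" using N by simp
    finally show ?thesis .
  qed
qed

lemma px_sum_block:
  assumes N: "2 \<le> N"
  shows "(\<Sum>j<N. (cmod (perx N y (k*N+j)))^2) = (if k = 0 then (\<Sum>j<N. (cmod (y j))^2) else (cmod (perx N y k))^2 / N)"
proof (cases "k = 0")
  case True
  then show ?thesis by (simp add: px_lo)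
next
  case False
  have "(\<Sum>j<N. (cmod (perx N y (k*N+j)))^2) = (\<Sum>j<N. (cmod (perx N y k))^2 / (real N)^2)"
    using px_block[OF N _ , of _ k y] False by (simp add: norm_divide power_divide)
  also have "\<dots> = (cmod (perx N y k))^2 / N"
    using N by (simp add: power2_eq_square)
  finally show ?thesis using False by simp
qed

lemma px_sum_block_diff:
  assumes N: "2 \<le> N" and y: "\<And>i. i \<ge> N \<Longrightarrow> y i = 0"
  shows "(\<Sum>j<N. (cmod (perx N y (k*N+j) - y (k*N+j)))^2) \<le> (cmod (perx N y k))^2 / N"
proof (cases "k = 0")
  case True
  then show ?thesis by (simp add: px_lo)
next
  case False
  have "\<And>j. j < N \<Longrightarrow> y (k*N+j) = 0" using y False by (simp add: trans_le_add1)
  then have "(\<Sum>j<N. (cmod (perx N y (k*N+j) - y (k*N+j)))^2) = (\<Sum>j<N. (cmod (perx N y (k*N+j)))^2)"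
    by simp
  then show ?thesis using px_sum_block[OF N, of y k] False by simp
qed

lemma sum_pow_group:
  fixes N :: nat and f :: "nat \<Rightarrow> 'a::comm_monoid_add"
  shows "(\<Sum>m<N^Suc r. f m) = (\<Sum>k<N^r. \<Sum>j<N. f (k*N + j))"
proof -
  have "(\<Sum>m<N^Suc r. f m) = (\<Sum>m<N^r*N. f m)" by (simp only: power_Suc2)
  also have "\<dots> = (\<Sum>k<N^r. sum f {k*N..<k*N+N})" by (rule sum.nat_group[symmetric])
  also have "\<dots> = (\<Sum>k<N^r. \<Sum>j<N. f (k*N + j))" by (simp add: sum_shift_ivl)
  finally show ?thesis .
qed

lemma px_bounds:
  fixes y :: "nat \<Rightarrow> complex"
  assumes N: "2 \<le> N"
  defines "Y \<equiv> (\<Sum>j<N. (cmod (y j))^2)"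
  shows "(\<Sum>m<N^r. (cmod (perx N y m))^2) \<le> Y * N / (N - 1)"
proof (induction r)
  case 0
  have "(cmod (y 0))^2 \<le> Y" unfolding Y_def
    using N by (intro member_le_sum) auto
  also have "Y \<le> Y * N / (N - 1)"
    using N by (simp add: field_simps Y_def sum_nonneg)
  finally show ?case using N by (simp add: px_lo)
next
  case (Suc r)
  have "(\<Sum>m<N^Suc r. (cmod (perx N y m))^2) = (\<Sum>k<N^r. \<Sum>j<N. (cmod (perx N y (k*N+j)))^2)"
    by (rule sum_pow_group)
  also have "\<dots> = (\<Sum>k<N^r. if k = 0 then Y else (cmod (perx N y k))^2 / N)"
    unfolding Y_def using px_sum_block[OF N] by simp
  also have "\<dots> \<le> (\<Sum>k<N^r. (if k = 0 then Y else 0) + (cmod (perx N y k))^2 / N)"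
    by (rule sum_mono) auto
  also have "\<dots> = Y + (\<Sum>k<N^r. (cmod (perx N y k))^2) / N"
    using N by (simp add: sum.distrib sum_divide_distrib)
  also have "\<dots> \<le> Y + (Y * N / (N - 1)) / N"
    by (rule add_left_mono, rule divide_right_mono[OF Suc.IH]) simp
  also have "\<dots> = Y * N / (N - 1)"
    using N by (simp add: field_simps)
  finally show ?case .
qed

lemma px_diff_bounds:
  fixes y :: "nat \<Rightarrow> complex"
  assumes N: "2 \<le> N" and y: "\<And>i. i \<ge> N \<Longrightarrow> y i = 0"
  defines "Y \<equiv> (\<Sum>j<N. (cmod (y j))^2)"
  shows "(\<Sum>m<N^Suc r. (cmod (perx N y m - y m))^2) \<le> Y / (N - 1)"
proof -
  have "(\<Sum>m<N^Suc r. (cmod (perx N y m - y m))^2) = (\<Sum>k<N^r. \<Sum>j<N. (cmod (perx N y (k*N+j) - y (k*N+j)))^2)"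
    by (rule sum_pow_group)
  also have "\<dots> \<le> (\<Sum>k<N^r. (cmod (perx N y k))^2 / N)"
    by (rule sum_mono) (rule px_sum_block_diff[OF N y])
  also have "\<dots> = (\<Sum>k<N^r. (cmod (perx N y k))^2) / N"
    by (simp add: sum_divide_distrib)
  also have "\<dots> \<le> (Y * N / (N - 1)) / N"
    by (rule divide_right_mono[OF px_bounds[OF N, of y r, folded Y_def]]) simp
  also have "\<dots> = Y / (N - 1)"
    using N by (simp add: field_simps)
  finally show ?thesis .
qed

lemma pow_ge: "2 \<le> (N::nat) \<Longrightarrow> K \<le> N^K"
proof -
  assume N: "2 \<le> N"
  have "K < 2^K" by (rule less_exp)
  also have "(2::nat)^K \<le> N^K" using N by (rule power_mono) simp
  finally show ?thesis by simp
qed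

lemma px_l2:
  fixes y :: "nat \<Rightarrow> complex"
  assumes N: "2 \<le> N" and y: "\<And>i. i \<ge> N \<Longrightarrow> y i = 0"
  defines "Y \<equiv> (\<Sum>j<N. (cmod (y j))^2)"
  shows "l2 (perx N y) \<and> l2 (\<lambda>m. perx N y m - y m) \<and> (nrm (\<lambda>m. perx N y m - y m))^2 \<le> Y / (N - 1)"
proof -
  have "l2 (perx N y)"
  proof (rule conjunct1[OF l2_boundI])
    fix K
    have "(\<Sum>m<K. (cmod (perx N y m))^2) \<le> (\<Sum>m<N^K. (cmod (perx N y m))^2)"
      using pow_ge[OF N, of K] by (intro sum_mono2) auto
    also have "\<dots> \<le> Y * N / (N - 1)" unfolding Y_def by (rule px_bounds[OF N])
    finally show "(\<Sum>m<K. (cmod (perx N y m))^2) \<le> Y * N / (N - 1)" .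
  qed
  moreover have "l2 (\<lambda>m. perx N y m - y m) \<and> (nrm (\<lambda>m. perx N y m - y m))^2 \<le> Y / (N - 1)"
  proof (rule l2_boundI)
    fix K
    have "(\<Sum>m<K. (cmod (perx N y m - y m))^2) \<le> (\<Sum>m<N^Suc K. (cmod (perx N y m - y m))^2)"
      using pow_ge[OF N, of "Suc K"] by (intro sum_mono2) auto
    also have "\<dots> \<le> Y / (N - 1)" unfolding Y_def by (rule px_diff_bounds[OF N y])
    finally show "(\<Sum>m<K. (cmod (perx N y m - y m))^2) \<le> Y / (N - 1)" .
  qed
  ultimately show ?thesis by blast
qed

lemma geom_tail_eq: "(\<Sum>j<Suc k + t. if Suc k \<le> j then (1/2::real)^j else 0) = (1/2)^k - (1/2)^(k+t)"
proof (induction t)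
  case 0 then show ?case by simp
next
  case (Suc t)
  have "(\<Sum>j<Suc k + Suc t. if Suc k \<le> j then (1/2::real)^j else 0)
        = (\<Sum>j<Suc k + t. if Suc k \<le> j then (1/2::real)^j else 0) + (1/2)^(Suc k + t)"
    by simp
  also have "\<dots> = (1/2)^k - (1/2)^(k+t) + (1/2)^(Suc k + t)" using Suc by simp
  also have "(1/2::real)^(k+t) = 2 * (1/2)^(Suc k + t)" by simp
  finally show ?case by simp
qed

lemma geom_tail: "(\<Sum>j<K. if Suc k \<le> j then (1/2::real)^j else 0) \<le> (1/2)^k"
proof -
  have "(\<Sum>j<K. if Suc k \<le> j then (1/2::real)^j else 0) \<le> (\<Sum>j<Suc k + K. if Suc k \<le> j then (1/2::real)^j else 0)"
    by (rule sum_mono2) auto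
  also have "\<dots> = (1/2)^k - (1/2)^(k+K)" by (rule geom_tail_eq)
  also have "\<dots> \<le> (1/2)^k" by simp
  finally show ?thesis .
qed

lemma sq_disjoint:
  assumes "finite A" "\<And>j j'. j \<in> A \<Longrightarrow> j' \<in> A \<Longrightarrow> j \<noteq> j' \<Longrightarrow> f j = 0 \<or> f j' = 0"
  shows "(cmod (sum f A))^2 = (\<Sum>j\<in>A. (cmod (f j))^2)"
proof (cases "\<exists>j0\<in>A. f j0 \<noteq> 0")
  case False
  then show ?thesis by simp
next
  case True
  then obtain j0 where j0: "j0 \<in> A" "f j0 \<noteq> 0" by blast
  have z: "\<And>j. j \<in> A - {j0} \<Longrightarrow> f j = 0" using assms(2) j0 by blast
  have "sum f A = f j0 + sum f (A - {j0})" using assms(1) j0 by (simp add: sum.remove)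
  also have "sum f (A - {j0}) = 0" using z by simp
  finally have a: "sum f A = f j0" by simp
  have "(\<Sum>j\<in>A. (cmod (f j))^2) = (cmod (f j0))^2 + (\<Sum>j\<in>A - {j0}. (cmod (f j))^2)"
    using assms(1) j0 by (simp add: sum.remove)
  also have "(\<Sum>j\<in>A - {j0}. (cmod (f j))^2) = 0" using z by simp
  finally show ?thesis using a by simp
qed

locale hyp =
  fixes n :: nat and E :: "nat \<Rightarrow> nat \<Rightarrow> complex" and Ms :: "nat \<Rightarrow> nat"
  assumes n2: "2 \<le> n"
    and Esupp: "\<And>j i. Ms j \<le> i \<Longrightarrow> E j i = 0"
    and Esum: "\<And>j. (\<Sum>i<Ms j. E j i) = 0"
    and Ms1: "\<And>j. 1 \<le> Ms j"
begin

definition "Y j = (nrm (E j))^2"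
definition "Mp j = (case j of 0 \<Rightarrow> 0 | Suc i \<Rightarrow> Ms i)"
definition "Rf j m = Mp j * n^m + j"
definition "Lf j m = nat \<lceil>Y j * 2^j * real n^m\<rceil> + 1"

primrec mm :: "nat \<Rightarrow> nat" where
  "mm 0 = 0"
| "mm (Suc j) = mm j + Mp j + Rf j (mm j) + Lf j (mm j)"

definition "R j = Rf j (mm j)"
definition "L j = Lf j (mm j)"
definition "Nn j = n^(mm (Suc j))"
definition "z j i = (if R j \<le> i mod Nn j \<and> i mod Nn j < R j + L j then E j (i div Nn j) / of_nat (L j) else 0)"
definition "x i = (\<Sum>j<Suc i. z j i)"
definition "w k i = (if i < R (Suc k) then 0 else x i)"

lemma E_l2: "l2 (E j)" and Y_eq: "Y j = (\<Sum>i<Ms j. (cmod (E j i))^2)"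
  using l2_fin[of "Ms j" "E j"] Esupp by (auto simp: Y_def)

lemma Y_nonneg: "0 \<le> Y j" by (simp add: Y_def)

lemma L_pos: "0 < L j" by (simp add: L_def Lf_def)

lemma RL_le: "R j + L j \<le> mm (Suc j)"
  by (simp add: R_def L_def)

lemma mm_le_Nn: "mm (Suc j) \<le> Nn j"
  unfolding Nn_def using pow_ge[OF n2] .

lemma Nn_pos: "0 < Nn j"
  using n2 by (simp add: Nn_def)

lemma mm_mono: "j \<le> k \<Longrightarrow> mm j \<le> mm k"
  by (rule lift_Suc_mono_le[of mm]) auto

lemma R_Suc: "R (Suc j) = Ms j * Nn j + Suc j"
  by (simp add: R_def Rf_def Mp_def Nn_def)

lemma R_ge: "j \<le> R j"
  by (simp add: R_def Rf_def)

lemma R_le_Suc: "R j \<le> R (Suc j)"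
proof -
  have "R j \<le> mm (Suc j)" using RL_le[of j] by simp
  also have "\<dots> \<le> Nn j" by (rule mm_le_Nn)
  also have "\<dots> \<le> Ms j * Nn j" using Ms1[of j] by simp
  also have "\<dots> \<le> R (Suc j)" by (simp add: R_Suc)
  finally show ?thesis .
qed

lemma R_mono: "j \<le> k \<Longrightarrow> R j \<le> R k"
  by (rule lift_Suc_mono_le[of R]) (auto intro: R_le_Suc)

lemma z_supp: "z j i \<noteq> 0 \<Longrightarrow> R j \<le> i \<and> i < Ms j * Nn j"
proof -
  assume nz: "z j i \<noteq> 0"
  then have a: "R j \<le> i mod Nn j" and b: "E j (i div Nn j) \<noteq> 0"
    by (auto simp: z_def split: if_splits)
  have "i mod Nn j \<le> i" by simp
  then have "R j \<le> i" using a by linarith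
  moreover have "i div Nn j < Ms j" using b Esupp not_le by blast
  then have "i < Ms j * Nn j" using Nn_pos[of j] by (simp add: div_less_iff_less_mult)
  ultimately show ?thesis by blast
qed

lemma z_supp2: "z j i \<noteq> 0 \<Longrightarrow> R j \<le> i \<and> i < R (Suc j)"
  using z_supp[of j i] R_Suc[of j] by auto

lemma z_disj: "z j i \<noteq> 0 \<Longrightarrow> z j' i \<noteq> 0 \<Longrightarrow> j = j'"
proof (rule ccontr)
  assume a: "z j i \<noteq> 0" "z j' i \<noteq> 0" "j \<noteq> j'"
  show False
  proof (cases "j < j'")
    case True
    have "R (Suc j) \<le> R j'" using True by (intro R_mono) simp
    then show False using z_supp2[OF a(1)] z_supp2[OF a(2)] by linarith
  next
    case False
    then have "j' < j" using a(3) by simp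
    have "R (Suc j') \<le> R j" using \<open>j' < j\<close> by (intro R_mono) simp
    then show False using z_supp2[OF a(1)] z_supp2[OF a(2)] by linarith
  qed
qed

lemma z_block:
  assumes r: "r < Nn j"
  shows "z j (q * Nn j + r) = (if R j \<le> r \<and> r < R j + L j then E j q / of_nat (L j) else 0)"
proof -
  have "(q * Nn j + r) mod Nn j = r" using r by simp
  moreover have "(q * Nn j + r) div Nn j = q" using px_idx[OF Nn_pos r] .
  ultimately show ?thesis by (simp add: z_def)
qed

lemma block_filter:
  fixes g :: "nat \<Rightarrow> 'a::comm_monoid_add"
  assumes "R j + L j \<le> N"
  shows "(\<Sum>r<N. if R j \<le> r \<and> r < R j + L j then g r else 0) = (\<Sum>r\<in>{R j..<R j + L j}. g r)"
  by (rule sum.mono_neutral_cong_right) (use assms in auto)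

lemma RL_Nn: "R j + L j \<le> Nn j"
  using RL_le[of j] mm_le_Nn[of j] by linarith

lemma Bk_z: "Bk (Nn j) (z j) = E j"
proof
  fix q
  have "Bk (Nn j) (z j) q = (\<Sum>r<Nn j. z j (q * Nn j + r))"
    by (simp add: Bk_def sum_shift_ivl)
  also have "\<dots> = (\<Sum>r<Nn j. if R j \<le> r \<and> r < R j + L j then E j q / of_nat (L j) else 0)"
    by (rule sum.cong) (auto simp: z_block)
  also have "\<dots> = (\<Sum>r\<in>{R j..<R j + L j}. E j q / of_nat (L j))"
    by (rule block_filter[OF RL_Nn])
  also have "\<dots> = E j q" using L_pos[of j] by simp
  finally show "Bk (Nn j) (z j) q = E j q" .
qed

lemma Bk_E_zero:
  assumes P: "Ms j \<le> P"
  shows "Bk P (E j) q = 0"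
proof (cases "q = 0")
  case True
  have "Bk P (E j) q = (\<Sum>i<P. E j i)"
    using True by (simp add: Bk_def atLeast0LessThan)
  also have "\<dots> = (\<Sum>i<Ms j. E j i)"
    by (rule sum.mono_neutral_right) (use P Esupp in auto)
  also have "\<dots> = 0" by (rule Esum)
  finally show ?thesis .
next
  case False
  have "\<And>i. i \<in> {q*P..<q*P+P} \<Longrightarrow> E j i = 0"
  proof -
    fix i assume "i \<in> {q*P..<q*P+P}"
    then have "P \<le> i" using False by auto (metis le_trans mult_le_mono1 One_nat_def Suc_leI neq0_conv mult_1)
    then show "E j i = 0" using P Esupp by simp
  qed
  then show ?thesis by (simp add: Bk_def)
qed

lemma Bk_z_zero:
  assumes jk: "j < k"
  shows "Bk (Nn k) (z j) q = 0"
proof -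
  define d where "d = mm (Suc k) - mm (Suc j)"
  have "mm (Suc (Suc j)) \<le> mm (Suc k)" using jk by (intro mm_mono) simp
  then have dge: "Ms j \<le> d" by (simp add: d_def Mp_def)
  have "Nn k = Nn j * n^d"
    using mm_mono[of "Suc j" "Suc k"] jk by (simp add: Nn_def d_def power_add[symmetric])
  then have "Bk (Nn k) (z j) = Bk (n^d) (Bk (Nn j) (z j))"
    using Bk_comp[OF Nn_pos[of j], of "n^d" "z j"] by simp
  also have "\<dots> = Bk (n^d) (E j)" by (simp add: Bk_z)
  finally show ?thesis using Bk_E_zero[of j "n^d" q] dge pow_ge[OF n2, of d] by simp
qed

lemma z_bound: "(\<Sum>i<K. (cmod (z j i))^2) \<le> Y j / L j"
proof -
  have "(\<Sum>i<K. (cmod (z j i))^2) \<le> (\<Sum>i<K * Nn j. (cmod (z j i))^2)"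
    using Nn_pos[of j] by (intro sum_mono2) auto
  also have "\<dots> = (\<Sum>q<K. sum (\<lambda>i. (cmod (z j i))^2) {q * Nn j..<q * Nn j + Nn j})"
    by (rule sum.nat_group[symmetric])
  also have "\<dots> = (\<Sum>q<K. (cmod (E j q))^2 / L j)"
  proof (rule sum.cong[OF refl])
    fix q
    have "sum (\<lambda>i. (cmod (z j i))^2) {q * Nn j..<q * Nn j + Nn j} = (\<Sum>r<Nn j. (cmod (z j (q * Nn j + r)))^2)"
      by (simp add: sum_shift_ivl)
    also have "\<dots> = (\<Sum>r<Nn j. if R j \<le> r \<and> r < R j + L j then (cmod (E j q / of_nat (L j)))^2 else 0)"
      by (rule sum.cong) (auto simp: z_block)
    also have "\<dots> = (\<Sum>r\<in>{R j..<R j + L j}. (cmod (E j q / of_nat (L j)))^2)"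
      by (rule block_filter[OF RL_Nn])
    also have "\<dots> = (cmod (E j q))^2 / L j"
      using L_pos[of j] by (simp add: norm_divide power2_eq_square)
    finally show "sum (\<lambda>i. (cmod (z j i))^2) {q * Nn j..<q * Nn j + Nn j} = (cmod (E j q))^2 / L j" .
  qed
  also have "\<dots> = (\<Sum>q<K. (cmod (E j q))^2) / L j"
    by (simp add: sum_divide_distrib)
  also have "\<dots> \<le> Y j / L j"
    using l2_partial[OF E_l2[of j], of K] by (simp add: Y_def divide_right_mono)
  finally show ?thesis .
qed

lemma z_l2: "l2 (z j)"
  using l2_boundI[of "z j" "Y j / L j"] z_bound by blast

lemma YL_small:
  assumes "Suc k \<le> j"
  shows "Nn k * (Y j / L j) \<le> (1/2)^j"
proof -
  have "Y j * 2^j * real n^(mm j) \<le> real (nat \<lceil>Y j * 2^j * real n^(mm j)\<rceil>)"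
    by (rule real_nat_ceiling_ge)
  then have Lge: "Y j * 2^j * real n^(mm j) \<le> L j"
    by (simp add: L_def Lf_def)
  have "real (Nn k) \<le> real n^(mm j)"
    using mm_mono[OF assms] n2 by (simp add: Nn_def power_increasing)
  then have "Nn k * (Y j / L j) \<le> real n^(mm j) * (Y j / L j)"
    using Y_nonneg[of j] L_pos[of j] by (intro mult_right_mono) auto
  also have "\<dots> \<le> (1/2)^j"
  proof -
    have "real n^(mm j) * Y j * 2^j \<le> L j" using Lge by (simp add: mult.commute mult.left_commute)
    then have "real n^(mm j) * Y j \<le> L j / 2^j" by (simp add: field_simps)
    then have "real n^(mm j) * Y j / L j \<le> 1 / 2^j" using L_pos[of j] by (simp add: field_simps)
    then show ?thesis by (simp add: power_one_over)
  qed
  finally show ?thesis .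
qed

lemma x_decomp: "x i = (\<Sum>j<Suc k. z j i) + w k i"
proof (cases "i < R (Suc k)")
  case True
  have "x i = (\<Sum>j<Suc (max i k). z j i)"
    unfolding x_def
  proof (rule sum.mono_neutral_left)
    show "\<forall>j\<in>{..<Suc (max i k)} - {..<Suc i}. z j i = 0"
      using z_supp2 R_ge by (metis DiffD2 lessThan_iff less_Suc_eq_le not_le order_less_le_trans)
  qed auto
  also have "\<dots> = (\<Sum>j<Suc k. z j i)"
  proof (rule sum.mono_neutral_right)
    show "\<forall>j\<in>{..<Suc (max i k)} - {..<Suc k}. z j i = 0"
    proof
      fix j assume "j \<in> {..<Suc (max i k)} - {..<Suc k}"
      then have "Suc k \<le> j" by auto
      then have "R (Suc k) \<le> R j" by (rule R_mono)
      then show "z j i = 0" using True z_supp2[of j i] by linarith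
    qed
  qed auto
  finally show ?thesis using True by (simp add: w_def)
next
  case False
  have "\<And>j. j < Suc k \<Longrightarrow> z j i = 0"
  proof -
    fix j assume "j < Suc k"
    then have "R (Suc j) \<le> R (Suc k)" by (intro R_mono) simp
    then show "z j i = 0" using False z_supp2[of j i] by linarith
  qed
  then show ?thesis using False by (simp add: w_def)
qed

lemma w_pt: 
  assumes iK: "i < K"
  shows "(cmod (w k i))^2 \<le> (\<Sum>j<K. if Suc k \<le> j then (cmod (z j i))^2 else 0)"
proof (cases "i < R (Suc k)")
  case True
  then show ?thesis by (simp add: w_def sum_nonneg)
next
  case False
  have zk: "\<And>j. j < Suc k \<Longrightarrow> z j i = 0"
  proof -
    fix j assume "j < Suc k"
    then have "R (Suc j) \<le> R (Suc k)" by (intro R_mono) simp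
    then show "z j i = 0" using False z_supp2[of j i] by linarith
  qed
  have "(cmod (w k i))^2 = (cmod (x i))^2" using False by (simp add: w_def)
  also have "\<dots> = (\<Sum>j<Suc i. (cmod (z j i))^2)"
    unfolding x_def by (rule sq_disjoint) (use z_disj in auto)
  also have "\<dots> = (\<Sum>j<Suc i. if Suc k \<le> j then (cmod (z j i))^2 else 0)"
    by (rule sum.cong) (auto simp: zk)
  also have "\<dots> \<le> (\<Sum>j<K. if Suc k \<le> j then (cmod (z j i))^2 else 0)"
    using iK by (intro sum_mono2) auto
  finally show ?thesis .
qed

lemma w_bound: "l2 (w k) \<and> (nrm (w k))^2 \<le> (1/2)^k / Nn k"
proof (rule l2_boundI)
  fix K
  have "(\<Sum>i<K. (cmod (w k i))^2) \<le> (\<Sum>i<K. \<Sum>j<K. if Suc k \<le> j then (cmod (z j i))^2 else 0)"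
    by (rule sum_mono) (rule w_pt, simp)
  also have "\<dots> = (\<Sum>j<K. \<Sum>i<K. if Suc k \<le> j then (cmod (z j i))^2 else 0)"
    by (rule sum.swap)
  also have "\<dots> = (\<Sum>j<K. if Suc k \<le> j then (\<Sum>i<K. (cmod (z j i))^2) else 0)"
    by (rule sum.cong) auto
  also have "\<dots> \<le> (\<Sum>j<K. if Suc k \<le> j then Y j / L j else 0)"
    by (rule sum_mono) (auto simp: z_bound)
  also have "\<dots> \<le> (\<Sum>j<K. if Suc k \<le> j then (1/2)^j / Nn k else 0)"
  proof (rule sum_mono)
    fix j
    show "(if Suc k \<le> j then Y j / L j else 0) \<le> (if Suc k \<le> j then (1/2)^j / Nn k else 0)"
      using YL_small[of k j] Nn_pos[of k] by (auto simp: field_simps)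
  qed
  also have "\<dots> = (\<Sum>j<K. if Suc k \<le> j then (1/2::real)^j else 0) / Nn k"
    unfolding sum_divide_distrib by (rule sum.cong) auto
  also have "\<dots> \<le> (1/2)^k / Nn k"
    by (rule divide_right_mono[OF geom_tail]) simp
  finally show "(\<Sum>i<K. (cmod (w k i))^2) \<le> (1/2)^k / Nn k" .
qed

lemma x_l2: "l2 x"
proof -
  have "x = (\<lambda>i. z 0 i + w 0 i)" using x_decomp[of _ 0] by (simp add: fun_eq_iff)
  then show ?thesis using l2_triangle[OF z_l2[of 0] conjunct1[OF w_bound[of 0]]] by simp
qed

lemma Bk_x: "Bk (Nn k) x q = E k q + Bk (Nn k) (w k) q"
proof -
  have "x = (\<lambda>i. (\<Sum>j<Suc k. z j i) + w k i)" using x_decomp[of _ k] by (simp add: fun_eq_iff)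
  then have "Bk (Nn k) x q = Bk (Nn k) (\<lambda>i. \<Sum>j<Suc k. z j i) q + Bk (Nn k) (w k) q"
    by (simp add: Bk_add)
  also have "Bk (Nn k) (\<lambda>i. \<Sum>j<Suc k. z j i) q = (\<Sum>j<Suc k. Bk (Nn k) (z j) q)"
    by (rule Bk_sum)
  also have "\<dots> = Bk (Nn k) (z k) q + (\<Sum>j<k. Bk (Nn k) (z j) q)"
    by simp
  also have "(\<Sum>j<k. Bk (Nn k) (z j) q) = 0"
    by (simp add: Bk_z_zero)
  finally show ?thesis by (simp add: Bk_z)
qed

lemma x_close: "nrm (\<lambda>q. Bk (Nn k) x q - E k q) \<le> sqrt ((1/2)^k)"
proof -
  have e: "(\<lambda>q. Bk (Nn k) x q - E k q) = Bk (Nn k) (w k)"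
    by (simp add: fun_eq_iff Bk_x)
  have wb: "l2 (w k)" "(nrm (w k))^2 \<le> (1/2)^k / Nn k" using w_bound by auto
  have bb: "l2 (Bk (Nn k) (w k))" "(nrm (Bk (Nn k) (w k)))^2 \<le> Nn k * (nrm (w k))^2"
    using Bk_bound[OF wb(1) Nn_pos[of k]] by auto
  have "Nn k * (nrm (w k))^2 \<le> Nn k * ((1/2)^k / Nn k)"
    using wb(2) by (intro mult_left_mono) auto
  also have "\<dots> = (1/2)^k" using Nn_pos[of k] by simp
  finally have "(nrm (Bk (Nn k) (w k)))^2 \<le> (1/2)^k" using bb(2) by linarith
  then show ?thesis unfolding e using nrm_nonneg[OF bb(1)] by (simp add: real_le_rsqrt)
qed

end

lemma nrm_tri3':
  assumes "l2 x" "l2 y" "l2 z" "nrm (\<lambda>i. x i - y i) < a" "nrm (\<lambda>i. y i - z i) < b"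
  shows "nrm (\<lambda>i. x i - z i) < a + b"
  using nrm_tri3[OF assms(1-3)] assms(4,5) by linarith

lemma trunc_l2: "l2 (\<lambda>i. if i < M then c i else 0)"
  by (rule l2_fin(1)[of M]) simp

lemma periodic_approx:
  assumes n: "2 \<le> n" and c: "l2 c" and e: "0 < e"
  shows "\<exists>x p. 1 \<le> p \<and> l2 x \<and> Bk (n^p) x = x \<and> nrm (\<lambda>i. x i - c i) < e"
proof -
  define d where "d = e / 3"
  have d: "0 < d" using e by (simp add: d_def)
  obtain M where M: "nrm (\<lambda>i. (if i < M then c i else 0) - c i) < d"
    using trunc_approx[OF c d] by blast
  define t where "t = (\<lambda>i. if i < M then c i else 0)"
  define M1 where "M1 = Suc M"
  have tsupp: "\<And>i. M1 \<le> i \<Longrightarrow> t i = 0" by (simp add: t_def M1_def)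
  have tl2: "l2 t" unfolding t_def by (rule trunc_l2)
  define s where "s = (\<Sum>i\<in>{1..<M1}. t i)"
  obtain Q :: nat where Q: "0 < Q" "cmod s / sqrt Q < d" using small_sqrt[OF d, of "cmod s"] by blast
  define y where "y = corr t M1 (-s) Q"
  have ysupp: "\<And>i. M1 + Q \<le> i \<Longrightarrow> y i = 0" unfolding y_def by (rule corr_supp[OF tsupp])
  have yl2: "l2 y" by (rule l2_fin(1)[of "M1+Q"]) (simp add: ysupp)
  have ysum: "(\<Sum>i\<in>{1..<M1+Q}. y i) = 0"
  proof -
    have "(\<Sum>i\<in>{1..<M1+Q}. y i) = (\<Sum>i\<in>{1..<M1}. t i) + (\<Sum>i\<in>{M1..<M1+Q}. t i) + (-s)"
      unfolding y_def by (rule corr_sum[OF Q(1)]) (simp add: M1_def)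
    also have "(\<Sum>i\<in>{M1..<M1+Q}. t i) = 0" using tsupp by simp
    finally show ?thesis by (simp add: s_def)
  qed
  have yt: "nrm (\<lambda>i. y i - t i) < d"
    using corr_nrm[OF Q(1), of t M1 "-s"] Q(2) by (simp add: y_def)
  define Y0 where "Y0 = (\<Sum>j<M1+Q. (cmod (y j))^2)"
  have Y0: "0 \<le> Y0" by (simp add: Y0_def sum_nonneg)
  define p where "p = M1 + Q + 2 + nat \<lceil>Y0 / d^2\<rceil>"
  define N where "N = n^p"
  have pN: "p \<le> N" unfolding N_def by (rule pow_ge[OF n])
  have N2: "2 \<le> N" using pN by (simp add: p_def)
  have NM: "M1 + Q \<le> N" using pN by (simp add: p_def)
  have p1: "1 \<le> p" by (simp add: p_def)
  have ysuppN: "\<And>i. N \<le> i \<Longrightarrow> y i = 0" using ysupp NM by simp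
  have YN: "(\<Sum>j<N. (cmod (y j))^2) = Y0"
    unfolding Y0_def by (rule sum.mono_neutral_right) (use NM ysupp in auto)
  have sumN: "(\<Sum>i\<in>{1..<N}. y i) = 0"
  proof -
    have "(\<Sum>i\<in>{1..<N}. y i) = (\<Sum>i\<in>{1..<M1+Q}. y i)"
      by (rule sum.mono_neutral_right) (use NM ysupp in auto)
    then show ?thesis using ysum by simp
  qed
  define x where "x = perx N y"
  have px: "l2 x" "l2 (\<lambda>m. x m - y m)" "(nrm (\<lambda>m. x m - y m))^2 \<le> Y0 / (N - 1)"
    using px_l2[OF N2 ysuppN] YN by (auto simp: x_def)
  have "Y0 / (real N - 1) < d^2"
  proof -
    have "Y0 / d^2 \<le> real (nat \<lceil>Y0 / d^2\<rceil>)" by (rule real_nat_ceiling_ge)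
    also have "\<dots> < real N - 1" using pN by (simp add: p_def)
    finally have "Y0 / d^2 < real N - 1" .
    then have "Y0 < d^2 * (real N - 1)" using d by (simp add: divide_less_eq mult.commute)
    then show ?thesis using N2 by (simp add: divide_less_eq mult.commute)
  qed
  moreover have "real (N - 1) = real N - 1" using N2 by simp
  ultimately have "(nrm (\<lambda>m. x m - y m))^2 < d^2" using px(3) by simp
  then have xy: "nrm (\<lambda>m. x m - y m) < d" using d by (meson power_less_imp_less_base less_le)
  have xfix: "Bk (n^p) x = x" unfolding x_def N_def[symmetric] by (rule px_fix[OF N2 sumN])
  have "nrm (\<lambda>i. y i - c i) < d + d"
    by (rule nrm_tri3'[OF yl2 tl2 c yt]) (use M in \<open>simp add: t_def\<close>)
  then have "nrm (\<lambda>i. x i - c i) < d + (d + d)"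
    by (rule nrm_tri3'[OF px(1) yl2 c xy])
  then have "nrm (\<lambda>i. x i - c i) < e" by (simp add: d_def)
  then show ?thesis using p1 px(1) xfix by blast
qed

definition Ep :: "(rat \<times> rat) list \<times> nat \<Rightarrow> nat \<Rightarrow> complex" where
  "Ep \<pi> = corr (vecq (fst \<pi>)) (length (fst \<pi>)) (- (\<Sum>i<length (fst \<pi>). vecq (fst \<pi>) i)) (Suc (snd \<pi>))"

definition Msp :: "(rat \<times> rat) list \<times> nat \<Rightarrow> nat" where
  "Msp \<pi> = length (fst \<pi>) + Suc (snd \<pi>)"

lemma vecq_supp: "length l \<le> i \<Longrightarrow> vecq l i = 0"
  by (simp add: vecq_def)

lemma Ep_supp: "Msp \<pi> \<le> i \<Longrightarrow> Ep \<pi> i = 0"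
  unfolding Ep_def Msp_def by (rule corr_supp) (auto simp: vecq_supp)

lemma Ep_sum: "(\<Sum>i<Msp \<pi>. Ep \<pi> i) = 0"
proof -
  have "(\<Sum>i<Msp \<pi>. Ep \<pi> i) = (\<Sum>i\<in>{0..<length (fst \<pi>) + Suc (snd \<pi>)}. Ep \<pi> i)"
    by (simp add: Msp_def atLeast0LessThan)
  also have "\<dots> = (\<Sum>i\<in>{0..<length (fst \<pi>)}. vecq (fst \<pi>) i) + (\<Sum>i\<in>{length (fst \<pi>)..<length (fst \<pi>) + Suc (snd \<pi>)}. vecq (fst \<pi>) i) + (- (\<Sum>i<length (fst \<pi>). vecq (fst \<pi>) i))"
    unfolding Ep_def by (rule corr_sum) auto
  also have "(\<Sum>i\<in>{length (fst \<pi>)..<length (fst \<pi>) + Suc (snd \<pi>)}. vecq (fst \<pi>) i) = 0"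
    by (simp add: vecq_supp)
  finally show ?thesis by (simp add: atLeast0LessThan)
qed

lemma Msp1: "1 \<le> Msp \<pi>" by (simp add: Msp_def)

lemma Ep_dense:
  assumes c: "l2 c" and e: "0 < e"
  shows "\<exists>\<pi>. nrm (\<lambda>i. Ep \<pi> i - c i) < e"
proof -
  define d where "d = e / 3"
  have d: "0 < d" using e by (simp add: d_def)
  obtain M where M: "nrm (\<lambda>i. (if i < M then c i else 0) - c i) < d"
    using trunc_approx[OF c d] by blast
  define t where "t = (\<lambda>i. if i < M then c i else 0)"
  have tl2: "l2 t" unfolding t_def by (rule trunc_l2)
  obtain l where l: "length l = M" "nrm (\<lambda>i. vecq l i - t i) < d"
    using vecq_approx[of M t d] d by (auto simp: t_def)
  have vl2: "l2 (vecq l)" by (rule l2_fin(1)[of "length l"]) (simp add: vecq_supp)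
  define s where "s = (\<Sum>i<length l. vecq l i)"
  obtain Q :: nat where Q: "0 < Q" "cmod s / sqrt Q < d" using small_sqrt[OF d, of "cmod s"] by blast
  obtain Q' where Q': "Q = Suc Q'" using Q(1) not0_implies_Suc by blast
  define \<pi> where "\<pi> = (l, Q')"
  have El2: "l2 (Ep \<pi>)" by (rule l2_fin(1)[of "Msp \<pi>"]) (simp add: Ep_supp)
  have "nrm (\<lambda>i. Ep \<pi> i - vecq l i) = cmod (-s) / sqrt (Suc Q')"
    unfolding Ep_def \<pi>_def s_def by (simp add: corr_nrm)
  then have Ev: "nrm (\<lambda>i. Ep \<pi> i - vecq l i) < d" using Q Q' by simp
  have "nrm (\<lambda>i. vecq l i - c i) < d + d"
    by (rule nrm_tri3'[OF vl2 tl2 c l(2)]) (use M in \<open>simp add: t_def\<close>)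
  then have "nrm (\<lambda>i. Ep \<pi> i - c i) < d + (d + d)"
    by (rule nrm_tri3'[OF El2 vl2 c Ev])
  then have "nrm (\<lambda>i. Ep \<pi> i - c i) < e" by (simp add: d_def)
  then show ?thesis by blast
qed

definition Eseq :: "nat \<Rightarrow> nat \<Rightarrow> complex" where
  "Eseq j = Ep (from_nat (fst (prod_decode j)))"

definition Mseq :: "nat \<Rightarrow> nat" where
  "Mseq j = Msp (from_nat (fst (prod_decode j)))"

lemma Eseq_dense:
  assumes c: "l2 c" and e: "0 < e"
  shows "\<exists>j\<ge>K. nrm (\<lambda>i. Eseq j i - c i) < e"
proof -
  obtain \<pi> where \<pi>: "nrm (\<lambda>i. Ep \<pi> i - c i) < e" using Ep_dense[OF c e] by blast
  define j where "j = prod_encode (to_nat \<pi>, K)"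
  have "K \<le> j" unfolding j_def by (rule le_prod_encode_2)
  moreover have "Eseq j = Ep \<pi>" by (simp add: Eseq_def j_def)
  ultimately show ?thesis using \<pi> by auto
qed

lemma hyp_inst: "2 \<le> n \<Longrightarrow> hyp n Eseq Mseq"
  unfolding hyp_def Eseq_def Mseq_def using Ep_supp Ep_sum Msp1 by blast

theorem mainTheorem2:
  fixes n :: nat
  assumes "n \<ge> 2"
  shows "h2_devaney_chaotic (W_adj n)"
proof -
  have n0: "0 < n" using assms by simp
  have iterH2: "(W_adj n ^^ k) g \<in> H2" if g: "g \<in> H2" for g k
    using W_adj_iter[OF n0 g, of k] fnc_H2 Bk_bound[OF H2_l2[OF g]] n0 by simp
  have hc: "h2_hypercyclic (W_adj n)"
  proof -
    interpret hyp n Eseq Mseq by (rule hyp_inst[OF assms])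
    define f0 where "f0 = fnc x"
    have f0: "f0 \<in> H2" "h2coeff f0 = x" using fnc_H2[OF x_l2] by (auto simp: f0_def)
    have "h2_dense {(W_adj n ^^ k) f0 | k. True}"
      unfolding h2_dense_def
    proof (intro conjI ballI allI impI)
      show "{(W_adj n ^^ k) f0 | k. True} \<subseteq> H2" using iterH2[OF f0(1)] by auto
    next
      fix g :: "complex \<Rightarrow> complex" and e :: real
      assume g: "g \<in> H2" and e: "0 < e"
      define c where "c = h2coeff g"
      have c: "l2 c" using g by (simp add: c_def H2_l2)
      have "0 < (e/2)^2" using e by simp
      then obtain K where K: "(1/2::real)^K < (e/2)^2" using real_arch_pow_inv[of "(e/2)^2" "1/2::real"] by auto
      obtain j where j: "K \<le> j" "nrm (\<lambda>i. Eseq j i - c i) < e/2"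
        using Eseq_dense[OF c, of "e/2" K] e by auto
      have "(1/2::real)^j \<le> (1/2)^K" using j(1) by (simp add: power_decreasing)
      then have "sqrt ((1/2::real)^j) < e/2"
        using K e by (metis order_le_less_trans real_sqrt_less_mono real_sqrt_abs abs_of_pos half_gt_zero power2_abs)
      then have b1: "nrm (\<lambda>q. Bk (Nn j) x q - Eseq j q) < e/2" using x_close[of j] by linarith
      have bl: "l2 (Bk (Nn j) x)" using Bk_bound[OF x_l2 Nn_pos[of j]] by simp
      have El: "l2 (Eseq j)" using E_l2 .
      have orb: "(W_adj n ^^ mm (Suc j)) f0 = fnc (Bk (Nn j) x)"
        using W_adj_iter[OF n0 f0(1)] f0(2) by (simp add: Nn_def)
      have "h2dist ((W_adj n ^^ mm (Suc j)) f0) g = nrm (\<lambda>q. Bk (Nn j) x q - c q)"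
        unfolding orb h2dist_nrm using fnc_H2[OF bl] by (simp add: c_def)
      also have "\<dots> < e/2 + e/2" by (rule nrm_tri3'[OF bl El c b1 j(2)])
      finally show "\<exists>f\<in>{(W_adj n ^^ k) f0 | k. True}. h2dist f g < e" by auto
    qed
    then show ?thesis unfolding h2_hypercyclic_def using f0(1) by blast
  qed
  have pd: "h2_dense (h2_periodic_points (W_adj n))"
    unfolding h2_dense_def
  proof (intro conjI ballI allI impI)
    show "h2_periodic_points (W_adj n) \<subseteq> H2" by (auto simp: h2_periodic_points_def)
  next
    fix g :: "complex \<Rightarrow> complex" and e :: real
    assume g: "g \<in> H2" and e: "0 < e"
    define c where "c = h2coeff g"
    have c: "l2 c" using g by (simp add: c_def H2_l2)
    obtain x p where xp: "1 \<le> p" "l2 x" "Bk (n^p) x = x" "nrm (\<lambda>i. x i - c i) < e"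
      using periodic_approx[OF assms c e] by blast
    define f where "f = fnc x"
    have f: "f \<in> H2" "h2coeff f = x" using fnc_H2[OF xp(2)] by (auto simp: f_def)
    have "(W_adj n ^^ p) f = f"
      using W_adj_iter[OF n0 f(1), of p] f(2) xp(3) by (simp add: f_def)
    then have "f \<in> h2_periodic_points (W_adj n)"
      using f(1) xp(1) by (auto simp: h2_periodic_points_def)
    moreover have "h2dist f g < e" using xp(4) f(2) by (simp add: h2dist_nrm c_def)
    ultimately show "\<exists>f\<in>h2_periodic_points (W_adj n). h2dist f g < e" by blast
  qed
  show ?thesis unfolding h2_devaney_chaotic_def using hc pd by blast
qed

end
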